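(* In the setting of the blurring mean-shift iteration with $f$ PDD and fixed positive weights, let $C_1=\bigcap_{t\ge0}C_1^{(t)}$ where $C_1^{(t)}$ is the convex hull of $\{x_1^{(t)},\dots,x_N^{(t)}\}$. Suppose $i$ is an index such that $x_i^{(t)}\to v$ as $t\to\infty$ for some vertex $v$ of $C_1$. Then for every index $j$ such that $\lim_{t\to\infty}x_j^{(t)}\neq v$, we have $\lim_{t\to\infty}f(x_i^{(t)}-x_j^{(t)})=0$.
   Context: Setting: $x_1,\dots,x_N\in\mathbb{R}^p$, fixed weights $w_1,\dots,w_N>0$, and $f:\mathbb{R}^p\to[0,1]$ PDD, meaning: $f(u)=1$ iff $u=0$; $f(u)=\varphi(\|u\|)$ for some $\varphi:[0,\infty)\to[0,1]$; $\varphi$ is decreasing (non-increasing). The blurring mean-shift iteration is $x_i^{(0)}=x_i$ and $x_i^{(t+1)}=\frac{\sum_{j=1}^N f(x_i^{(t)}-x_j^{(t)})w_jx_j^{(t)}}{\sum_{j=1}^N f(x_i^{(t)}-x_j^{(t)})w_j}$. *)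

theory Defs
  imports "HOL-Analysis.Analysis"
begin

text \<open>Blurring mean-shift iteration on points indexed by 0..N-1.
  bms f w N x0 t i is the point x_i^(t).\<close>
primrec bms :: "('a::real_normed_vector \<Rightarrow> real) \<Rightarrow> (nat \<Rightarrow> real) \<Rightarrow> nat
    \<Rightarrow> (nat \<Rightarrow> 'a) \<Rightarrow> nat \<Rightarrow> nat \<Rightarrow> 'a" where
  "bms f w N x0 0 = x0"
| "bms f w N x0 (Suc t) =
     (\<lambda>i. (\<Sum>j<N. (f (bms f w N x0 t i - bms f w N x0 t j) * w j) *\<^sub>R bms f w N x0 t j)
          /\<^sub>R (\<Sum>j<N. f (bms f w N x0 t i - bms f w N x0 t j) * w j))"

definition PDD :: "('a::real_normed_vector \<Rightarrow> real) \<Rightarrow> bool" where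
  "PDD f \<longleftrightarrow> (\<forall>u. 0 \<le> f u \<and> f u \<le> 1) \<and> (\<forall>u. f u = 1 \<longleftrightarrow> u = 0) \<and>
     (\<exists>\<phi>::real \<Rightarrow> real. (\<forall>u. f u = \<phi> (norm u)) \<and>
        (\<forall>r s. 0 \<le> r \<longrightarrow> r \<le> s \<longrightarrow> \<phi> s \<le> \<phi> r))"

end

theory Submission
  imports Defs "HOL-Library.Infinite_Set"
begin

lemma comb_in_hull:
  fixes a :: "nat \<Rightarrow> real" and y :: "nat \<Rightarrow> 'a::real_vector"
  assumes "finite A" "\<And>k. k\<in>A \<Longrightarrow> 0 \<le> a k" "sum a A > 0" "A \<subseteq> B"
  shows "(\<Sum>k\<in>A. a k *\<^sub>R y k) /\<^sub>R sum a A \<in> convex hull (y ` B)"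
proof -
  have "(\<Sum>k\<in>A. (a k / sum a A) *\<^sub>R y k) \<in> convex hull (y ` B)"
  proof (rule convex_sum[OF assms(1) convex_convex_hull])
    show "(\<Sum>i\<in>A. a i / sum a A) = 1" using assms(3) by (simp add: sum_divide_distrib[symmetric])
    show "\<And>i. i \<in> A \<Longrightarrow> 0 \<le> a i / sum a A" using assms(2,3) by simp
    show "\<And>i. i \<in> A \<Longrightarrow> y i \<in> convex hull y ` B" using assms(4) by (meson hull_inc image_eqI subsetD)
  qed
  moreover have "(\<Sum>k\<in>A. (a k / sum a A) *\<^sub>R y k) = (\<Sum>k\<in>A. a k *\<^sub>R y k) /\<^sub>R sum a A"
    by (simp add: scaleR_sum_right divide_inverse_commute mult.commute)
  ultimately show ?thesis by simp
qed

lemma t1: fixes x r :: "'a::real_vector" assumes "s = aj + S'" "s > 0"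
  shows "(aj *\<^sub>R x + S' *\<^sub>R r) /\<^sub>R s = (aj/s) *\<^sub>R x + (1 - aj/s) *\<^sub>R r"
proof -
  have "1 - aj/s = S'/s" using assms by (simp add: field_simps)
  then show ?thesis by (simp add: scaleR_add_right divide_inverse_commute)
qed
lemma t2: fixes v u r0 :: "'a::real_vector" assumes "v = a *\<^sub>R u + (1 - a) *\<^sub>R r0" "u \<noteq> v" "a \<in> {c..1}" "c > 0"
  shows "v \<in> open_segment u r0"
proof -
      have ne1: "a \<noteq> 1" using assms by auto
      have ne2: "u \<noteq> r0" using assms  by (auto simp: algebra_simps)
      have "v = (1 - (1 - a)) *\<^sub>R u + (1 - a) *\<^sub>R r0" using assms by simp
      then show ?thesis unfolding in_segment using ne1 ne2 assms(3,4) by (intro conjI exI[of _ "1 - a"]) auto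
qed

theorem lemma3:
  fixes f :: "'a::euclidean_space \<Rightarrow> real" and w :: "nat \<Rightarrow> real"
    and x0 :: "nat \<Rightarrow> 'a" and N i j :: nat and v u :: 'a
  assumes "PDD f"
    and "\<forall>k<N. w k > 0"
    and "i < N" and "j < N"
    and "v extreme_point_of (\<Inter>t. convex hull ((\<lambda>k. bms f w N x0 t k) ` {..<N}))"
    and "(\<lambda>t. bms f w N x0 t i) \<longlonglongrightarrow> v"
    and "(\<lambda>t. bms f w N x0 t j) \<longlonglongrightarrow> u" and "u \<noteq> v"
  shows "(\<lambda>t. f (bms f w N x0 t i - bms f w N x0 t j)) \<longlonglongrightarrow> 0"
proof -
  define X where "X t k = bms f w N x0 t k" for t k
  define C where "C t = convex hull (X t ` {..<N})" for t
  have f0: "\<And>u. 0 \<le> f u" and f1: "\<And>u. f u \<le> 1" and f00: "f 0 = 1"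
    using assms(1) unfolding PDD_def by auto
  define a where "a t k = f (X t i - X t k) * w k" for t k
  have a0: "0 \<le> a t k" if "k < N" for t k using f0[of "X t i - X t k"] assms(2) that unfolding a_def by (simp add: less_imp_le)
  have Sp: "sum (a t) {..<N} > 0" for t
  proof -
    have "a t i \<le> sum (a t) {..<N}" by (rule member_le_sum) (use a0 assms(3) in auto)
    moreover have "a t i > 0" using f00 assms(2,3) unfolding a_def by simp
    ultimately show ?thesis by linarith
  qed
  have step: "X (Suc t) k \<in> C t" if "k < N" for t k
  proof -
    have "0 < (\<Sum>j<N. f (X t k - X t j) * w j)"
    proof -
      have "f (X t k - X t k) * w k \<le> (\<Sum>j<N. f (X t k - X t j) * w j)"
        by (rule member_le_sum) (use f0 assms(2) that in auto)
      moreover have "f (X t k - X t k) * w k > 0" using f00 assms(2) that by simp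
      ultimately show ?thesis by linarith
    qed
    then have "(\<Sum>j<N. (f (X t k - X t j) * w j) *\<^sub>R X t j) /\<^sub>R (\<Sum>j<N. f (X t k - X t j) * w j) \<in> C t"
      unfolding C_def by (intro comb_in_hull) (use f0 assms(2) in auto)
    then show ?thesis by (simp add: X_def)
  qed
  have Csub: "C (Suc t) \<subseteq> C t" for t
    unfolding C_def[of "Suc t"] by (rule hull_minimal) (use step convex_convex_hull in \<open>auto simp: C_def\<close>)
  have Cmono: "C s \<subseteq> C t" if "t \<le> s" for s t
    using that by (induction s rule: dec_induct) (use Csub in auto)
  have inC: "X s k \<in> C t" if "t \<le> s" "k < N" for s t k
    using Cmono[OF that(1)] that(2) unfolding C_def by (meson hull_inc image_eqI subsetD lessThan_iff)
  have Ccl: "closed (C t)" for t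
    unfolding C_def by (simp add: compact_imp_closed compact_convex_hull finite_imp_compact)
  have Ccp: "compact (C t)" for t
    unfolding C_def by (simp add: compact_convex_hull finite_imp_compact)
  have Ccv: "convex (C t)" for t unfolding C_def by simp
  have ext: "v extreme_point_of (\<Inter>t. C t)" using assms(5) unfolding C_def X_def by simp
  have uC: "u \<in> C m" for m
    by (rule Lim_in_closed_set[OF Ccl _ _ assms(7)[folded X_def]])
       (use inC assms(4) in \<open>auto simp: eventually_sequentially\<close>)
  define S' where "S' t = sum (a t) ({..<N} - {j})" for t
  define r where "r t = (if S' t = 0 then X t j else (\<Sum>k\<in>{..<N} - {j}. a t k *\<^sub>R X t k) /\<^sub>R S' t)" for t
  define al where "al t = a t j / sum (a t) {..<N}" for t
  have S'0: "S' t \<ge> 0" for t unfolding S'_def by (rule sum_nonneg) (use a0 in auto)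
  have rC: "r t \<in> C t" for t
  proof (cases "S' t = 0")
    case True then show ?thesis using inC[of t t j] assms(4) by (simp add: r_def)
  next
    case False
    then have "S' t > 0" using S'0[of t] by simp
    have "(\<Sum>k\<in>{..<N} - {j}. a t k *\<^sub>R X t k) /\<^sub>R sum (a t) ({..<N} - {j}) \<in> C t"
      unfolding C_def by (rule comb_in_hull) (use a0 \<open>S' t > 0\<close> in \<open>auto simp: S'_def\<close>)
    then show ?thesis unfolding r_def using False by (simp add: S'_def)
  qed
  have split: "sum g {..<N} = g j + sum g ({..<N} - {j})" for g :: "nat \<Rightarrow> 'b::comm_monoid_add"
    using assms(4) by (metis finite_lessThan lessThan_iff sum.remove)
  have decomp: "X (Suc t) i = al t *\<^sub>R X t j + (1 - al t) *\<^sub>R r t" for t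
  proof -
    have S: "sum (a t) {..<N} = a t j + S' t" unfolding S'_def by (rule split)
    have num: "(\<Sum>k\<in>{..<N} - {j}. a t k *\<^sub>R X t k) = S' t *\<^sub>R r t"
    proof (cases "S' t = 0")
      case True
      have "\<forall>k\<in>{..<N} - {j}. a t k = 0"
        using True unfolding S'_def by (subst (asm) sum_nonneg_eq_0_iff) (use a0 in auto)
      then show ?thesis using True by simp
    next
      case False then show ?thesis by (simp add: r_def)
    qed
    have "X (Suc t) i = (\<Sum>k<N. a t k *\<^sub>R X t k) /\<^sub>R sum (a t) {..<N}"
      by (simp add: X_def a_def)
    also have "\<dots> = (a t j *\<^sub>R X t j + S' t *\<^sub>R r t) /\<^sub>R sum (a t) {..<N}"
      by (subst split) (simp add: num)
    also have "\<dots> = al t *\<^sub>R X t j + (1 - al t) *\<^sub>R r t"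
      unfolding al_def by (rule t1[OF S Sp])
    finally show ?thesis .
  qed
  show ?thesis
  proof (rule ccontr)
    assume H: "\<not> (\<lambda>t. f (bms f w N x0 t i - bms f w N x0 t j)) \<longlonglongrightarrow> 0"
    obtain e where e: "e > 0" "\<forall>T. \<exists>t\<ge>T. f (X t i - X t j) \<ge> e"
    proof -
      have "\<not> (\<forall>e>0. \<exists>T. \<forall>t\<ge>T. f (X t i - X t j) < e)"
      proof
        assume A: "\<forall>e>0. \<exists>T. \<forall>t\<ge>T. f (X t i - X t j) < e"
        have "(\<lambda>t. f (X t i - X t j)) \<longlonglongrightarrow> 0"
          unfolding lim_sequentially using A f0 by (simp add: dist_real_def)
        then show False using H unfolding X_def by simp
      qed
      then show ?thesis using that by (auto simp: not_less)
    qed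
    have "infinite {t. f (X t i - X t j) \<ge> e}"
      using e(2) by (simp add: infinite_nat_iff_unbounded_le)
    then obtain \<sigma> :: "nat \<Rightarrow> nat" where sig: "strict_mono \<sigma>" "\<And>n. f (X (\<sigma> n) i - X (\<sigma> n) j) \<ge> e"
      using infinite_enumerate by blast
    define W where "W = sum w {..<N}"
    have Sle: "sum (a t) {..<N} \<le> W" for t
      unfolding W_def a_def
    proof (rule sum_mono)
      fix k assume "k \<in> {..<N}"
      then have "0 \<le> w k" using assms(2) by (simp add: less_imp_le)
      then show "f (X t i - X t k) * w k \<le> w k"
        using f0 f1 by (intro mult_left_le_one_le) auto
    qed
    have Wp: "W > 0" using Sp[of 0] Sle[of 0] by linarith
    define c where "c = e * w j / W"
    have cp: "c > 0" unfolding c_def using e(1) Wp assms(2,4) by simp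
    have alb: "al (\<sigma> n) \<in> {c..1}" for n
    proof -
      have aj: "a (\<sigma> n) j \<ge> e * w j" unfolding a_def using sig(2)[of n] assms(2,4)
        by (simp add: mult_right_mono)
      have "a (\<sigma> n) j \<le> sum (a (\<sigma> n)) {..<N}" by (rule member_le_sum) (use a0 assms(4) in auto)
      moreover have "e * w j / W \<le> a (\<sigma> n) j / sum (a (\<sigma> n)) {..<N}"
        by (rule frac_le[OF _ aj Sp Sle]) (use a0 assms(4) in auto)
      ultimately show ?thesis using Sp[of "\<sigma> n"] unfolding al_def c_def by simp
    qed
    have "seq_compact (C 0 \<times> {c..1})"
      by (intro compact_imp_seq_compact compact_Times Ccp) simp
    moreover have "\<forall>n. (r (\<sigma> n), al (\<sigma> n)) \<in> C 0 \<times> {c..1}"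
      using rC alb Cmono by blast
    ultimately obtain l \<rho> where l: "l \<in> C 0 \<times> {c..1}" "strict_mono \<rho>"
      "((\<lambda>n. (r (\<sigma> n), al (\<sigma> n))) \<circ> \<rho>) \<longlonglongrightarrow> l"
      by (rule seq_compactE)
    obtain r0 a0' where l_eq: "l = (r0, a0')" by force
    define \<tau> where "\<tau> = \<sigma> \<circ> \<rho>"
    have tau: "strict_mono \<tau>" unfolding \<tau>_def using sig(1) l(2) by (rule strict_mono_o)
    have rl: "(\<lambda>n. r (\<tau> n)) \<longlonglongrightarrow> r0" and al_l: "(\<lambda>n. al (\<tau> n)) \<longlonglongrightarrow> a0'"
      using tendsto_fst[OF l(3)] tendsto_snd[OF l(3)] unfolding l_eq \<tau>_def by (auto simp: o_def)
    have a0r: "a0' \<in> {c..1}" using l(1) l_eq by auto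
    have xj: "(\<lambda>n. X (\<tau> n) j) \<longlonglongrightarrow> u"
      using LIMSEQ_subseq_LIMSEQ[OF assms(7) tau] by (simp add: X_def o_def)
    have xi: "(\<lambda>n. X (Suc (\<tau> n)) i) \<longlonglongrightarrow> v"
      using LIMSEQ_subseq_LIMSEQ[OF LIMSEQ_Suc[OF assms(6)] tau] by (simp add: X_def o_def)
    have "(\<lambda>n. al (\<tau> n) *\<^sub>R X (\<tau> n) j + (1 - al (\<tau> n)) *\<^sub>R r (\<tau> n)) \<longlonglongrightarrow> a0' *\<^sub>R u + (1 - a0') *\<^sub>R r0"
      by (intro tendsto_intros al_l xj rl)
    then have "(\<lambda>n. X (Suc (\<tau> n)) i) \<longlonglongrightarrow> a0' *\<^sub>R u + (1 - a0') *\<^sub>R r0"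
      by (simp add: decomp)
    with xi have veq: "v = a0' *\<^sub>R u + (1 - a0') *\<^sub>R r0" by (rule LIMSEQ_unique)
    have r0C: "r0 \<in> C m" for m
    proof (rule Lim_in_closed_set[OF Ccl _ _ rl])
      show "\<forall>\<^sub>F n in sequentially. r (\<tau> n) \<in> C m"
        unfolding eventually_sequentially
        using rC Cmono seq_suble[OF tau] by (meson order_trans subsetD)
    qed simp
    have "u \<in> (\<Inter>t. C t)" "r0 \<in> (\<Inter>t. C t)" using uC r0C by auto
    moreover have "v \<in> open_segment u r0" by (rule t2[OF veq assms(8) a0r cp])
    ultimately show False using ext unfolding extreme_point_of_def by blast
  qed
qed

end
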